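(* Let $\mathbf{A}\in\mathbb{R}^{(\ell m)\times(qn)}$ be a block matrix with $\ell\times q$ blocks of size $m\times n$, and let $\mathbf{B}=\mathbf{S}_{\ell,m}\mathbf{A}\mathbf{S}_{q,n}^\top$. Let $\mathscr{A}$, $\mathscr{B}$, $\mathscr{E}$, $\mathscr{F}$ be the inner blockspan, outer blockspan, outer structure space and inner structure space of $\mathbf{A}$. Then $\mathscr{B}\subseteq\mathscr{E}$ and $\mathscr{A}\subseteq\mathscr{F}$.
   Context: Block conventions: $\mathbf{A}^{(\gamma,\delta)}\in\mathbb{R}^{m\times n}$ is the block of $\mathbf{A}$ in block position $(\gamma,\delta)\in[\ell]\times[q]$, with $\mathbf{A}^{(\gamma,\delta)}_{\alpha\beta}=\mathbf{A}_{(\gamma-1)m+\alpha,(\delta-1)n+\beta}$. For $a,b\ge1$, $s=ab$, the shuffle matrix $\mathbf{S}_{a,b}\in\mathbb{R}^{s\times s}$ has row $(i-1)a+j$ equal to $\mathbf{e}^\top_{(j-1)b+i}$ ($i\in[b]$, $j\in[a]$). $\mathbf{B}\in\mathbb{R}^{(m\ell)\times(nq)}$ is viewed as an $m\times n$ grid of $\ell\times q$ blocks $\mathbf{B}^{(\alpha,\beta)}$, with $\mathbf{B}^{(\alpha,\beta)}_{\gamma\delta}=\mathbf{B}_{(\alpha-1)\ell+\gamma,(\beta-1)q+\delta}$. Let $\mathbf{A}_1,\dots,\mathbf{A}_p$ be the distinct nonzero blocks of $\mathbf{A}$, $\eta_k$ the number of block positions at which $\mathbf{A}_k$ occurs, and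 $\mathbf{E}_k\in\mathbb{R}^{\ell\times q}$ the location-tally matrix with $[\mathbf{E}_k]_{\gamma\delta}=1/\sqrt{\eta_k}$ if $\mathbf{A}^{(\gamma,\delta)}=\mathbf{A}_k$ and $0$ otherwise. Analogously let $\mathbf{B}_1,\dots,\mathbf{B}_\rho$ be the distinct nonzero blocks of $\mathbf{B}$, $\xi_\kappa$ the number of block positions of $\mathbf{B}$ at which $\mathbf{B}_\kappa$ occurs, and $\mathbf{F}_\kappa\in\mathbb{R}^{m\times n}$ with $[\mathbf{F}_\kappa]_{\alpha\beta}=1/\sqrt{\xi_\kappa}$ if $\mathbf{B}^{(\alpha,\beta)}=\mathbf{B}_\kappa$ and $0$ otherwise. Define $\mathscr{A}=\mathrm{span}\{\mathbf{A}_k\}$ (inner blockspan), $\mathscr{B}=\mathrm{span}\{\mathbf{B}_\kappa\}$ (outer blockspan), $\mathscr{E}=\mathrm{span}\{\mathbf{E}_k\}$ (outer structure space), $\mathscr{F}=\mathrm{span}\{\mathbf{F}_\kappa\}$ (inner structure space). *)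

theory Defs
  imports "Jordan_Normal_Form.Matrix"
begin

text \<open>All indices are 0-based. A matrix M viewed as a g1 x g2 grid of r x c blocks.\<close>

definition shuffle_mat :: "nat \<Rightarrow> nat \<Rightarrow> real mat" where
  "shuffle_mat a b = mat (a*b) (a*b)
     (\<lambda>(i,j). if j = (i mod a) * b + i div a then 1 else 0)"

definition sub_block :: "'a mat \<Rightarrow> nat \<Rightarrow> nat \<Rightarrow> nat \<Rightarrow> nat \<Rightarrow> 'a mat" where
  "sub_block M r c g d = mat r c (\<lambda>(i,j). M $$ (g*r + i, d*c + j))"

definition nz_blocks :: "real mat \<Rightarrow> nat \<Rightarrow> nat \<Rightarrow> nat \<Rightarrow> nat \<Rightarrow> real mat set" where
  "nz_blocks M r c g1 g2 =
     {sub_block M r c g d | g d. g < g1 \<and> d < g2} - {0\<^sub>m r c}"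

definition block_count :: "real mat \<Rightarrow> nat \<Rightarrow> nat \<Rightarrow> nat \<Rightarrow> nat \<Rightarrow> real mat \<Rightarrow> nat" where
  "block_count M r c g1 g2 X = card {(g,d). g < g1 \<and> d < g2 \<and> sub_block M r c g d = X}"

definition tally_mat :: "real mat \<Rightarrow> nat \<Rightarrow> nat \<Rightarrow> nat \<Rightarrow> nat \<Rightarrow> real mat \<Rightarrow> real mat" where
  "tally_mat M r c g1 g2 X = mat g1 g2 (\<lambda>(g,d).
     if sub_block M r c g d = X then 1 / sqrt (real (block_count M r c g1 g2 X)) else 0)"

definition mat_span :: "nat \<Rightarrow> nat \<Rightarrow> real mat set \<Rightarrow> real mat set" where
  "mat_span r c S = {M. M \<in> carrier_mat r c \<and>
     (\<exists>coef :: real mat \<Rightarrow> real. \<forall>i<r. \<forall>j<c. M $$ (i,j) = (\<Sum>X\<in>S. coef X * X $$ (i,j)))}"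

text \<open>A: (l*m) x (q*n), l x q grid of m x n blocks; B = S_{l,m} A S_{q,n}^T: m x n grid of l x q blocks.\<close>
definition inner_blockspan :: "real mat \<Rightarrow> nat \<Rightarrow> nat \<Rightarrow> nat \<Rightarrow> nat \<Rightarrow> real mat set" where
  "inner_blockspan A l q m n = mat_span m n (nz_blocks A m n l q)"

definition outer_structure_space :: "real mat \<Rightarrow> nat \<Rightarrow> nat \<Rightarrow> nat \<Rightarrow> nat \<Rightarrow> real mat set" where
  "outer_structure_space A l q m n =
     mat_span l q (tally_mat A m n l q ` nz_blocks A m n l q)"

definition outer_blockspan :: "real mat \<Rightarrow> nat \<Rightarrow> nat \<Rightarrow> nat \<Rightarrow> nat \<Rightarrow> real mat set" where
  "outer_blockspan B l q m n = mat_span l q (nz_blocks B l q m n)"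

definition inner_structure_space :: "real mat \<Rightarrow> nat \<Rightarrow> nat \<Rightarrow> nat \<Rightarrow> nat \<Rightarrow> real mat set" where
  "inner_structure_space B l q m n =
     mat_span m n (tally_mat B l q m n ` nz_blocks B l q m n)"

end

theory Submission
  imports Defs
begin

lemma fin_nz: "finite (nz_blocks M r c g1 g2)"
proof -
  have "{sub_block M r c g d | g d. g < g1 \<and> d < g2} = (\<lambda>(g,d). sub_block M r c g d) ` ({..<g1} \<times> {..<g2})"
    by auto
  then show ?thesis unfolding nz_blocks_def by simp
qed

lemma span_mono_gen:
  assumes fS: "finite S" and fT: "finite T"
    and rep: "\<forall>Y\<in>S. \<exists>d. \<forall>g<g1. \<forall>h<g2. Y $$ (g,h) = (\<Sum>X\<in>T. d X * X $$ (g,h))"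
  shows "mat_span g1 g2 S \<subseteq> mat_span g1 g2 T"
proof
  fix M assume "M \<in> mat_span g1 g2 S"
  then have MM: "M \<in> carrier_mat g1 g2 \<and> (\<exists>coef :: real mat \<Rightarrow> real. \<forall>i<g1. \<forall>j<g2. M $$ (i,j) = (\<Sum>X\<in>S. coef X * X $$ (i,j)))"
    unfolding mat_span_def by (rule CollectD)
  then have M: "M \<in> carrier_mat g1 g2" by (rule conjunct1)
  from conjunct2[OF MM] obtain c where c: "\<forall>i<g1. \<forall>j<g2. M $$ (i,j) = (\<Sum>Y\<in>S. c Y * Y $$ (i,j))"
    ..
  from bchoice[OF rep] obtain D where D: "\<forall>Y\<in>S. \<forall>g<g1. \<forall>h<g2. Y $$ (g,h) = (\<Sum>X\<in>T. D Y X * X $$ (g,h))"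
    ..
  have "\<forall>i<g1. \<forall>j<g2. M $$ (i,j) = (\<Sum>X\<in>T. (\<Sum>Y\<in>S. c Y * D Y X) * X $$ (i,j))"
  proof (intro allI impI)
    fix i j assume ij: "i < g1" "j < g2"
    have "M $$ (i,j) = (\<Sum>Y\<in>S. c Y * Y $$ (i,j))"
      by (rule c[rule_format, OF ij])
    also have "\<dots> = (\<Sum>Y\<in>S. c Y * (\<Sum>X\<in>T. D Y X * X $$ (i,j)))"
    proof (rule sum.cong[OF refl])
      fix Y assume Y: "Y \<in> S"
      have "Y $$ (i,j) = (\<Sum>X\<in>T. D Y X * X $$ (i,j))"
        by (rule D[rule_format, OF Y ij])
      then show "c Y * Y $$ (i,j) = c Y * (\<Sum>X\<in>T. D Y X * X $$ (i,j))"
        by (rule arg_cong)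
    qed
    also have "\<dots> = (\<Sum>Y\<in>S. \<Sum>X\<in>T. c Y * D Y X * X $$ (i,j))"
      by (simp add: sum_distrib_left mult.assoc)
    also have "\<dots> = (\<Sum>X\<in>T. \<Sum>Y\<in>S. c Y * D Y X * X $$ (i,j))"
      by (rule sum.swap)
    also have "\<dots> = (\<Sum>X\<in>T. (\<Sum>Y\<in>S. c Y * D Y X) * X $$ (i,j))"
      by (simp add: sum_distrib_right)
    finally show "M $$ (i,j) = (\<Sum>X\<in>T. (\<Sum>Y\<in>S. c Y * D Y X) * X $$ (i,j))" .
  qed
  then show "M \<in> mat_span g1 g2 T" unfolding mat_span_def using M by (intro CollectI conjI exI)
qed

lemma cancel_aux: "(a::real) \<noteq> 0 \<Longrightarrow> a * z * (1 / a) = z"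
  by simp

lemma entry_repr:
  fixes P :: "real mat"
  assumes g: "g < g1" "d < g2" and ij: "i < r" "j < c"
  shows "sub_block P r c g d $$ (i,j) =
    (\<Sum>X\<in>nz_blocks P r c g1 g2. sqrt (real (block_count P r c g1 g2 X)) * X $$ (i,j)
        * tally_mat P r c g1 g2 X $$ (g,d))"
proof -
  let ?Z = "sub_block P r c g d"
  let ?N = "nz_blocks P r c g1 g2"
  have cnt: "block_count P r c g1 g2 ?Z \<ge> 1"
  proof -
    have "finite {(g',d'). g' < g1 \<and> d' < g2 \<and> sub_block P r c g' d' = ?Z}"
      by (rule finite_subset[of _ "{..<g1} \<times> {..<g2}"]) auto
    moreover have "(g,d) \<in> {(g',d'). g' < g1 \<and> d' < g2 \<and> sub_block P r c g' d' = ?Z}"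
      using g by auto
    ultimately have "card {(g',d'). g' < g1 \<and> d' < g2 \<and> sub_block P r c g' d' = ?Z} > 0"
      by (subst card_gt_0_iff) blast
    then show ?thesis unfolding block_count_def by simp
  qed
  have "(\<Sum>X\<in>?N. sqrt (real (block_count P r c g1 g2 X)) * X $$ (i,j)
        * tally_mat P r c g1 g2 X $$ (g,d))
      = (\<Sum>X\<in>?N. if X = ?Z then ?Z $$ (i,j) else 0)"
  proof (rule sum.cong)
    fix X assume "X \<in> ?N"
    have tt: "tally_mat P r c g1 g2 X $$ (g,d) = (if ?Z = X then 1 / sqrt (real (block_count P r c g1 g2 X)) else 0)"
      unfolding tally_mat_def index_mat[OF g] by (simp only: case_prod_conv)
    show "sqrt (real (block_count P r c g1 g2 X)) * X $$ (i,j)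
        * tally_mat P r c g1 g2 X $$ (g,d) = (if X = ?Z then ?Z $$ (i,j) else 0)"
    proof (cases "X = ?Z")
      case True
      have pos: "sqrt (real (block_count P r c g1 g2 ?Z)) \<noteq> 0"
        using cnt by simp
      have "sqrt (real (block_count P r c g1 g2 X)) * X $$ (i,j)
        * tally_mat P r c g1 g2 X $$ (g,d) = sqrt (real (block_count P r c g1 g2 ?Z)) * ?Z $$ (i,j)
        * (1 / sqrt (real (block_count P r c g1 g2 ?Z)))"
        unfolding tt using True by (simp only: if_True refl)
      also have "\<dots> = ?Z $$ (i,j)" by (rule cancel_aux[OF pos])
      finally show ?thesis using True by (simp only: if_True refl)
    next
      case False
      then have "?Z \<noteq> X" by (rule not_sym)
      then show ?thesis unfolding tt using False by (simp only: if_False mult_0_right)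
    qed
  qed simp
  also have "\<dots> = (if ?Z \<in> ?N then ?Z $$ (i,j) else 0)"
    using fin_nz[of P r c g1 g2] by (simp add: sum.delta')
  also have "\<dots> = ?Z $$ (i,j)"
  proof (cases "?Z \<in> ?N")
    case False
    have "?Z \<in> {sub_block P r c g d | g d. g < g1 \<and> d < g2}" using g by blast
    with False have z: "?Z = 0\<^sub>m r c" unfolding nz_blocks_def by blast
    have "?Z $$ (i,j) = 0" unfolding z using ij by simp
    then show ?thesis using False by simp
  qed simp
  finally show ?thesis by (rule sym)
qed

lemma key:
  fixes P Q :: "real mat"
  assumes rel: "\<forall>g<g1. \<forall>d<g2. \<forall>i<r. \<forall>j<c.
     sub_block Q g1 g2 i j $$ (g,d) = sub_block P r c g d $$ (i,j)"
  shows "mat_span g1 g2 (nz_blocks Q g1 g2 r c)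
     \<subseteq> mat_span g1 g2 (tally_mat P r c g1 g2 ` nz_blocks P r c g1 g2)"
proof (rule span_mono_gen[OF fin_nz finite_imageI[OF fin_nz]], intro ballI)
  fix Y assume "Y \<in> nz_blocks Q g1 g2 r c"
  then obtain i j where ij: "i < r" "j < c" and Y: "Y = sub_block Q g1 g2 i j"
    unfolding nz_blocks_def by blast
  let ?N = "nz_blocks P r c g1 g2"
  let ?t = "tally_mat P r c g1 g2"
  let ?h = "\<lambda>X. sqrt (real (block_count P r c g1 g2 X)) * X $$ (i,j)"
  show "\<exists>dd. \<forall>g<g1. \<forall>h<g2. Y $$ (g,h) = (\<Sum>X\<in>?t ` ?N. dd X * X $$ (g,h))"
  proof (intro exI allI impI)
    fix g h assume gh: "g < g1" "h < g2"
    have "Y $$ (g,h) = sub_block Q g1 g2 i j $$ (g,h)" unfolding Y by (rule refl)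
    also have "\<dots> = sub_block P r c g h $$ (i,j)" by (rule rel[rule_format, OF gh ij])
    also have "\<dots> = (\<Sum>X\<in>?N. ?h X * ?t X $$ (g,h))"
      by (rule entry_repr[OF gh ij])
    also have "\<dots> = (\<Sum>T\<in>?t ` ?N. \<Sum>X\<in>{X\<in>?N. ?t X = T}. ?h X * ?t X $$ (g,h))"
      by (rule sum.image_gen[OF fin_nz])
    also have "\<dots> = (\<Sum>T\<in>?t ` ?N. (\<Sum>X\<in>{X\<in>?N. ?t X = T}. ?h X) * T $$ (g,h))"
    proof (rule sum.cong[OF refl])
      fix T assume "T \<in> ?t ` ?N"
      have "(\<Sum>X\<in>{X\<in>?N. ?t X = T}. ?h X * ?t X $$ (g,h)) = (\<Sum>X\<in>{X\<in>?N. ?t X = T}. ?h X * T $$ (g,h))"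
      proof (rule sum.cong[OF refl])
        fix X assume "X \<in> {X\<in>?N. ?t X = T}"
        then have "?t X = T" by blast
        then show "?h X * ?t X $$ (g,h) = ?h X * T $$ (g,h)" by (simp only:)
      qed
      also have "\<dots> = (\<Sum>X\<in>{X\<in>?N. ?t X = T}. ?h X) * T $$ (g,h)"
        by (rule sum_distrib_right[symmetric])
      finally show "(\<Sum>X\<in>{X\<in>?N. ?t X = T}. ?h X * ?t X $$ (g,h)) = (\<Sum>X\<in>{X\<in>?N. ?t X = T}. ?h X) * T $$ (g,h)" .
    qed
    finally show "Y $$ (g,h) = (\<Sum>T\<in>?t ` ?N. (\<Sum>X\<in>{X\<in>?N. ?t X = T}. ?h X) * T $$ (g,h))" .
  qed
qed

lemma perm_lt:
  fixes a b i :: nat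
  assumes i: "i < a*b"
  shows "(i mod a)*b + i div a < a*b"
proof -
  have "a > 0" using i by (cases a) auto
  have "i div a < b" using less_mult_imp_div_less[of i b a] i by (simp add: mult.commute)
  have "i mod a < a" using \<open>a > 0\<close> by simp
  have "(i mod a)*b + i div a < (i mod a)*b + b" using \<open>i div a < b\<close> by simp
  also have "\<dots> = Suc (i mod a) * b" by simp
  also have "\<dots> \<le> a * b" using \<open>i mod a < a\<close> by (intro mult_le_mono1) simp
  finally show ?thesis .
qed

lemma shuffle_left:
  assumes M: "M \<in> carrier_mat (a*b) k" and i: "i < a*b" and j: "j < k"
  shows "(shuffle_mat a b * M) $$ (i,j) = M $$ ((i mod a)*b + i div a, j)"
proof -
  have lt: "(i mod a)*b + i div a < a*b" using perm_lt[OF i] .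
  have "(shuffle_mat a b * M) $$ (i,j) = (\<Sum>x<a*b. (if x = (i mod a)*b + i div a then 1 else 0) * M $$ (x,j))"
    using M i j unfolding shuffle_mat_def
    by (simp add: scalar_prod_def atLeast0LessThan)
  also have "\<dots> = (\<Sum>x<a*b. if x = (i mod a)*b + i div a then M $$ (x,j) else 0)"
    by (intro sum.cong) auto
  also have "\<dots> = M $$ ((i mod a)*b + i div a, j)"
    using lt by simp
  finally show ?thesis .
qed

lemma shuffle_right:
  assumes M: "M \<in> carrier_mat k (a*b)" and i: "i < k" and j: "j < a*b"
  shows "(M * transpose_mat (shuffle_mat a b)) $$ (i,j) = M $$ (i, (j mod a)*b + j div a)"
proof -
  have "(M * transpose_mat (shuffle_mat a b)) = transpose_mat (shuffle_mat a b * transpose_mat M)"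
    using M by (simp add: transpose_mult[of _ "a*b" "a*b" _ k] shuffle_mat_def)
  then show ?thesis
    using shuffle_left[of "transpose_mat M" a b k j i] M i j perm_lt[OF j] by (simp add: shuffle_mat_def)
qed

lemma bnd:
  fixes a b x y :: nat
  assumes "x < a" "y < b"
  shows "x*b + y < b*a"
proof -
  have "x*b + y < x*b + b" using assms by simp
  also have "\<dots> = Suc x * b" by simp
  also have "\<dots> \<le> a * b" using assms(1) by (intro mult_le_mono1) simp
  finally show ?thesis by (simp add: mult.commute)
qed

lemma B_entry:
  fixes A :: "real mat"
  assumes A: "A \<in> carrier_mat (l * m) (q * n)"
    and B: "B = shuffle_mat l m * A * transpose_mat (shuffle_mat q n)"
    and ab: "\<alpha> < m" "\<beta> < n" "\<gamma> < l" "\<delta> < q"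
  shows "B $$ (\<alpha>*l+\<gamma>, \<beta>*q+\<delta>) = A $$ (\<gamma>*m+\<alpha>, \<delta>*n+\<beta>)"
proof -
  have i: "\<alpha>*l+\<gamma> < l*m" using bnd[OF ab(1,3)] by simp
  have j: "\<beta>*q+\<delta> < q*n" using bnd[OF ab(2,4)] by simp
  have m1: "(\<alpha>*l+\<gamma>) mod l = \<gamma>" using ab(3) by simp
  have m2: "(\<alpha>*l+\<gamma>) div l = \<alpha>" using ab(3) by simp
  have m3: "(\<beta>*q+\<delta>) mod q = \<delta>" using ab(4) by simp
  have m4: "(\<beta>*q+\<delta>) div q = \<beta>" using ab(4) by simp
  have jj: "\<delta>*n+\<beta> < q*n" using bnd[OF ab(4,2)] by (metis mult.commute)
  have SA: "shuffle_mat l m * A \<in> carrier_mat (l*m) (q*n)"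
    by (rule mult_carrier_mat[OF _ A]) (simp add: shuffle_mat_def)
  have "B $$ (\<alpha>*l+\<gamma>, \<beta>*q+\<delta>) = (shuffle_mat l m * A) $$ (\<alpha>*l+\<gamma>, \<delta>*n+\<beta>)"
    using shuffle_right[OF SA i j] unfolding B m1 m2 m3 m4 .
  also have "\<dots> = A $$ (\<gamma>*m+\<alpha>, \<delta>*n+\<beta>)"
    using shuffle_left[OF A i jj] unfolding m1 m2 .
  finally show ?thesis .
qed

theorem proposition1:
  fixes A B :: "real mat" and l q m n :: nat
  assumes "A \<in> carrier_mat (l * m) (q * n)"
    and "B = shuffle_mat l m * A * transpose_mat (shuffle_mat q n)"
  shows "outer_blockspan B l q m n \<subseteq> outer_structure_space A l q m n
     \<and> inner_blockspan A l q m n \<subseteq> inner_structure_space B l q m n"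
proof -
  have rel: "\<forall>g<l. \<forall>d<q. \<forall>i<m. \<forall>j<n.
     sub_block B l q i j $$ (g,d) = sub_block A m n g d $$ (i,j)"
  proof (intro allI impI)
    fix g d i j assume h: "g < l" "d < q" "i < m" "j < n"
    have "sub_block B l q i j $$ (g,d) = B $$ (i*l+g, j*q+d)"
      using h unfolding sub_block_def by simp
    also have "\<dots> = A $$ (g*m+i, d*n+j)"
      by (rule B_entry[OF assms h(3,4,1,2)])
    also have "\<dots> = sub_block A m n g d $$ (i,j)"
      using h unfolding sub_block_def by simp
    finally show "sub_block B l q i j $$ (g,d) = sub_block A m n g d $$ (i,j)" .
  qed
  have 1: "outer_blockspan B l q m n \<subseteq> outer_structure_space A l q m n"
    unfolding outer_blockspan_def outer_structure_space_def by (rule key[OF rel])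
  have rel2: "\<forall>g<m. \<forall>d<n. \<forall>i<l. \<forall>j<q.
     sub_block A m n i j $$ (g,d) = sub_block B l q g d $$ (i,j)"
    using rel by simp
  have 2: "inner_blockspan A l q m n \<subseteq> inner_structure_space B l q m n"
    unfolding inner_blockspan_def inner_structure_space_def by (rule key[OF rel2])
  from 1 2 show ?thesis ..
qed

end
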